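(* For all fixed $x,y\ge 1$, the expected number of edges in the random task-dependency graph resulting from the $(x,y)$ edge-removal process on $n$ vertices is $\Theta(n)$ as $n\to\infty$.
   Context: A task-dependency graph is a finite directed acyclic graph (no loops, no multiple edges). A vertex is initial if it has in-degree $0$ and terminal if it has out-degree $0$ (an isolated vertex is both). The $(x,y)$ edge-removal process on $n$ vertices: start with the task-dependency graph on $\{1,\dots,n\}$ having all edges $(a,b)$ with $a<b$. Edges are removed uniformly at random, one at a time; a removal that would cause more than $x$ initial vertices or more than $y$ terminal vertices is cancelled. The process terminates when no further edge can be removed. *)

theory Defs
  imports "HOL-Probability.Probability" "HOL-Library.Landau_Symbols"
begin

definition full_graph :: "nat \<Rightarrow> (nat \<times> nat) set" where
  "full_graph n = {(a,b). 1 \<le> a \<and> a < b \<and> b \<le> n}"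

definition initial_vertices :: "nat \<Rightarrow> (nat \<times> nat) set \<Rightarrow> nat set" where
  "initial_vertices n E = {v \<in> {1..n}. \<forall>u. (u,v) \<notin> E}"

definition terminal_vertices :: "nat \<Rightarrow> (nat \<times> nat) set \<Rightarrow> nat set" where
  "terminal_vertices n E = {v \<in> {1..n}. \<forall>w. (v,w) \<notin> E}"

text \<open>Edges whose removal is not cancelled.\<close>
definition removable :: "nat \<Rightarrow> nat \<Rightarrow> nat \<Rightarrow> (nat \<times> nat) set \<Rightarrow> (nat \<times> nat) set" where
  "removable n x y E = {e \<in> E. card (initial_vertices n (E - {e})) \<le> x
                              \<and> card (terminal_vertices n (E - {e})) \<le> y}"

text \<open>Distribution of the final graph of the process started from edge set E.
  Cancelled removals do not change the state, so the next effective removal is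
  uniform among the removable edges.\<close>
function removal_process :: "nat \<Rightarrow> nat \<Rightarrow> nat \<Rightarrow> (nat \<times> nat) set \<Rightarrow> (nat \<times> nat) set pmf" where
  "removal_process n x y E =
     (if finite E \<and> removable n x y E \<noteq> {}
      then bind_pmf (pmf_of_set (removable n x y E)) (\<lambda>e. removal_process n x y (E - {e}))
      else return_pmf E)"
  by pat_completeness auto
termination
proof (relation "Wellfounded.measure (\<lambda>(n,x,y,E). card E)")
  fix n x y E e
  assume a: "finite E \<and> removable n x y E \<noteq> {}" and b: "e \<in> set_pmf (pmf_of_set (removable n x y E))"
  have "finite (removable n x y E)" using a unfolding removable_def by auto
  hence "e \<in> E" using a b by (auto simp: removable_def)
  thus "((n, x, y, E - {e}), n, x, y, E) \<in> Wellfounded.measure (\<lambda>(n, x, y, E). card E)"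
    using a by (metis (no_types, lifting) card_Diff1_less case_prod_conv in_measure)
qed auto

definition final_graph :: "nat \<Rightarrow> nat \<Rightarrow> nat \<Rightarrow> (nat \<times> nat) set pmf" where
  "final_graph n x y = removal_process n x y (full_graph n)"

end

theory Submission
  imports Defs
begin

definition inv_ok :: "nat \<Rightarrow> nat \<Rightarrow> nat \<Rightarrow> (nat \<times> nat) set \<Rightarrow> bool" where
  "inv_ok n x y E \<longleftrightarrow> E \<subseteq> full_graph n \<and> card (initial_vertices n E) \<le> x
     \<and> card (terminal_vertices n E) \<le> y"

lemma finite_full: "finite (full_graph n)"
proof -
  have "full_graph n \<subseteq> {1..n} \<times> {1..n}" by (auto simp: full_graph_def)
  thus ?thesis by (rule finite_subset) auto
qed

lemma snd_full: "snd ` full_graph n \<subseteq> {1..n}"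
  by (auto simp: full_graph_def)

lemma fst_full: "fst ` full_graph n \<subseteq> {1..n}"
  by (auto simp: full_graph_def)

lemma process_inv:
  "inv_ok n x y E \<Longrightarrow> F \<in> set_pmf (removal_process n x y E) \<Longrightarrow>
     inv_ok n x y F \<and> removable n x y F = {}"
proof (induction n x y E rule: removal_process.induct)
  case (1 n x y E)
  have fin: "finite E" using "1.prems"(1) finite_full unfolding inv_ok_def
    by (meson finite_subset)
  show ?case
  proof (cases "removable n x y E = {}")
    case True
    have "removal_process n x y E = return_pmf E"
      by (subst removal_process.simps) (simp add: True)
    with True "1.prems" show ?thesis by simp
  next
    case False
    have finr: "finite (removable n x y E)" using fin unfolding removable_def by auto
    have "removal_process n x y E = bind_pmf (pmf_of_set (removable n x y E)) (\<lambda>e. removal_process n x y (E - {e}))"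
      by (subst removal_process.simps) (simp add: False fin)
    with "1.prems"(2) obtain e where e: "e \<in> set_pmf (pmf_of_set (removable n x y E))"
      and F: "F \<in> set_pmf (removal_process n x y (E - {e}))" by auto
    have er: "e \<in> removable n x y E" using e finr False by simp
    have "inv_ok n x y (E - {e})" using er "1.prems"(1) unfolding inv_ok_def removable_def by auto
    thus ?thesis using "1.IH"[OF _ e] fin False F by blast
  qed
qed

lemma init_full: "initial_vertices n (full_graph n) \<subseteq> {1}"
proof
  fix v assume v: "v \<in> initial_vertices n (full_graph n)"
  hence v1: "1 \<le> v" "v \<le> n" and nv: "\<forall>u. (u,v) \<notin> full_graph n"
    unfolding initial_vertices_def by auto
  show "v \<in> {1}"
  proof (rule ccontr)
    assume "v \<notin> {1}"
    hence "(1,v) \<in> full_graph n" using v1 unfolding full_graph_def by simp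
    thus False using nv by blast
  qed
qed

lemma term_full: "terminal_vertices n (full_graph n) \<subseteq> {n}"
proof
  fix v assume v: "v \<in> terminal_vertices n (full_graph n)"
  hence v1: "1 \<le> v" "v \<le> n" and nv: "\<forall>u. (v,u) \<notin> full_graph n"
    unfolding terminal_vertices_def by auto
  show "v \<in> {n}"
  proof (rule ccontr)
    assume "v \<notin> {n}"
    hence "(v,n) \<in> full_graph n" using v1 unfolding full_graph_def by simp
    thus False using nv by blast
  qed
qed

lemma full_inv: "x \<ge> 1 \<Longrightarrow> y \<ge> 1 \<Longrightarrow> inv_ok n x y (full_graph n)"
proof -
  assume x: "x \<ge> 1" and y: "y \<ge> 1"
  have a: "card (initial_vertices n (full_graph n)) \<le> 1"
    using card_mono[OF _ init_full] by simp
  have b: "card (terminal_vertices n (full_graph n)) \<le> 1"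
    using card_mono[OF _ term_full] by simp
  show ?thesis using a b x y unfolding inv_ok_def by auto
qed

lemma lower: assumes "inv_ok n x y F" shows "n - x \<le> card F"
proof -
  have sub: "F \<subseteq> full_graph n" using assms by (simp add: inv_ok_def)
  have finF: "finite F" using sub finite_full by (meson finite_subset)
  have "{1..n} - initial_vertices n F \<subseteq> snd ` F"
  proof
    fix v assume "v \<in> {1..n} - initial_vertices n F"
    then obtain u where "(u,v) \<in> F" unfolding initial_vertices_def by blast
    thus "v \<in> snd ` F" by force
  qed
  hence "card ({1..n} - initial_vertices n F) \<le> card (snd ` F)"
    using finF by (intro card_mono) auto
  also have "\<dots> \<le> card F" using finF by (rule card_image_le)
  finally have c: "card ({1..n} - initial_vertices n F) \<le> card F" .
  have "initial_vertices n F \<subseteq> {1..n}" unfolding initial_vertices_def by blast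
  hence "card ({1..n} - initial_vertices n F) = n - card (initial_vertices n F)"
    by (subst card_Diff_subset) (auto intro: finite_subset)
  with c assms show ?thesis unfolding inv_ok_def by linarith
qed

lemma upper: assumes "inv_ok n x y F" and "removable n x y F = {}" shows "card F \<le> 2 * n"
proof -
  have sub: "F \<subseteq> full_graph n" using assms by (simp add: inv_ok_def)
  have finF: "finite F" using sub finite_full by (meson finite_subset)
  define A where "A = {e\<in>F. \<forall>e'\<in>F. snd e' = snd e \<longrightarrow> e' = e}"
  define B where "B = {e\<in>F. \<forall>e'\<in>F. fst e' = fst e \<longrightarrow> e' = e}"
  have cA: "card A \<le> n"
  proof -
    have i: "inj_on snd A" unfolding A_def inj_on_def by blast
    have "A \<subseteq> full_graph n" using sub unfolding A_def by blast
    hence s: "snd ` A \<subseteq> {1..n}" using snd_full by blast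
    have "card (snd ` A) \<le> card {1..n}" using s by (rule card_mono[rotated]) simp
    then show ?thesis using card_image[OF i] by simp
  qed
  have cB: "card B \<le> n"
  proof -
    have i: "inj_on fst B" unfolding B_def inj_on_def by blast
    have "B \<subseteq> full_graph n" using sub unfolding B_def by blast
    hence s: "fst ` B \<subseteq> {1..n}" using fst_full by blast
    have "card (fst ` B) \<le> card {1..n}" using s by (rule card_mono[rotated]) simp
    then show ?thesis using card_image[OF i] by simp
  qed
  have "F \<subseteq> A \<union> B"
  proof
    fix e assume eF: "e \<in> F"
    show "e \<in> A \<union> B"
    proof (rule ccontr)
      assume "e \<notin> A \<union> B"
      then obtain e1 e2 where e1: "e1 \<in> F" "snd e1 = snd e" "e1 \<noteq> e"
        and e2: "e2 \<in> F" "fst e2 = fst e" "e2 \<noteq> e"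
        using eF unfolding A_def B_def by auto
      have i: "initial_vertices n (F - {e}) = initial_vertices n F"
      proof -
        have "(\<forall>u. (u,v) \<notin> F - {e}) \<longleftrightarrow> (\<forall>u. (u,v) \<notin> F)" for v
        proof
          assume h: "\<forall>u. (u,v) \<notin> F - {e}"
          show "\<forall>u. (u,v) \<notin> F"
          proof (intro allI notI)
            fix u assume uv: "(u,v) \<in> F"
            show False
            proof (cases "(u,v) = e")
              case True
              hence "(fst e1, v) = e1" using e1(2) by (metis prod.collapse snd_conv)
              thus False using h e1 by (metis DiffI singletonD)
            next
              case False thus False using h uv by blast
            qed
          qed
        qed auto
        thus ?thesis unfolding initial_vertices_def by auto
      qed
      have t: "terminal_vertices n (F - {e}) = terminal_vertices n F"
      proof -
        have "(\<forall>u. (v,u) \<notin> F - {e}) \<longleftrightarrow> (\<forall>u. (v,u) \<notin> F)" for v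
        proof
          assume h: "\<forall>u. (v,u) \<notin> F - {e}"
          show "\<forall>u. (v,u) \<notin> F"
          proof (intro allI notI)
            fix u assume uv: "(v,u) \<in> F"
            show False
            proof (cases "(v,u) = e")
              case True
              hence "(v, snd e2) = e2" using e2(2) by (metis prod.collapse fst_conv)
              thus False using h e2 by (metis DiffI singletonD)
            next
              case False thus False using h uv by blast
            qed
          qed
        qed auto
        thus ?thesis unfolding terminal_vertices_def by auto
      qed
      have "e \<in> removable n x y F" using eF i t assms(1) unfolding removable_def inv_ok_def by auto
      with assms(2) show False by simp
    qed
  qed
  hence "card F \<le> card (A \<union> B)" using finF by (intro card_mono) (auto simp: A_def B_def)
  also have "\<dots> \<le> card A + card B" by (rule card_Un_le)
  finally show ?thesis using cA cB by linarith
qed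

theorem mainTheorem8:
  fixes x y :: nat
  assumes "x \<ge> 1" and "y \<ge> 1"
  shows "(\<lambda>n. measure_pmf.expectation (final_graph n x y) (\<lambda>E. real (card E)))
           \<in> \<Theta>(\<lambda>n. real n)"
proof -
  define f where "f n = measure_pmf.expectation (final_graph n x y) (\<lambda>E. real (card E))" for n
  have bnd: "real n - real x \<le> f n \<and> f n \<le> 2 * real n" for n
  proof -
    have supp: "\<forall>F\<in>set_pmf (final_graph n x y). real n - real x \<le> real (card F) \<and> real (card F) \<le> 2 * real n"
    proof
      fix F assume "F \<in> set_pmf (final_graph n x y)"
      hence "inv_ok n x y F \<and> removable n x y F = {}"
        using process_inv[OF full_inv[OF assms]] unfolding final_graph_def by blast
      hence "n - x \<le> card F" "card F \<le> 2 * n" using lower upper by blast+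
      thus "real n - real x \<le> real (card F) \<and> real (card F) \<le> 2 * real n" by linarith
    qed
    have int: "integrable (measure_pmf (final_graph n x y)) (\<lambda>E. real (card E))"
      by (rule measure_pmf.integrable_const_bound[where B="2 * real n"])
         (use supp in \<open>auto simp: AE_measure_pmf_iff\<close>)
    show ?thesis unfolding f_def
      using measure_pmf.integral_ge_const[OF int, of "real n - real x"]
        measure_pmf.integral_le_const[OF int, of "2 * real n"] supp
      by (auto simp: AE_measure_pmf_iff)
  qed
  have "f \<in> \<Theta>(\<lambda>n. real n)"
  proof (rule bigthetaI'[of "1/2" "2"])
    show "\<forall>\<^sub>F n in at_top. 1/2 * norm (real n) \<le> norm (f n) \<and> norm (f n) \<le> 2 * norm (real n)"
      using eventually_ge_at_top[of "2 * x"]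
    proof eventually_elim
      case (elim n)
      have "real n - real x \<le> f n" "f n \<le> 2 * real n" using bnd[of n] by auto
      moreover have "real (2 * x) \<le> real n" using elim by linarith
      ultimately show ?case by auto
    qed
  qed auto
  thus ?thesis unfolding f_def .
qed

end
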